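(* Let $G=(V,E,s_0,s_1)$ be a switch graph, $o,d\in V$ with $o\neq d$, and let $e=(v,w)\in E$ be a hopeful edge of desperation $k$. Then $\textsc{Run}(G,o,d)$ traverses $e$ at most $2^{k+1}-1$ times.
   Context: A switch graph is a 4-tuple $G=(V,E,s_0,s_1)$ where $V$ is a finite vertex set, $s_0,s_1:V\to V$, and $E=\{(v,s_0(v)):v\in V\}\cup\{(v,s_1(v)):v\in V\}$ (loops allowed; possibly $s_0(v)=s_1(v)$). The procedure $\textsc{Run}(G,o,d)$: maintain arrays $\mathtt{s\_curr},\mathtt{s\_next}$ indexed by $V$, initially $\mathtt{s\_curr}[v]=s_0(v)$, $\mathtt{s\_next}[v]=s_1(v)$; set $v:=o$; while $v\neq d$: $w:=\mathtt{s\_curr}[v]$, swap $\mathtt{s\_curr}[v],\mathtt{s\_next}[v]$, $v:=w$ (traversing edge $(v,w)$); the run may be infinite. A dead end is a vertex from which there is no directed path to $d$ in the directed graph $(V,E)$. An edge $(v,w)$ is dead if $w$ is a dead end, and hopeful otherwise; the desperation of a hopeful edge $(v,w)$ is the length of a shortest directed path from $w$ to $d$ in $(V,E)$ (so desperation $0$ means $w=d$). *)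

theory Defs
  imports Main
begin

definition switch_graph :: "'a set \<Rightarrow> ('a \<Rightarrow> 'a) \<Rightarrow> ('a \<Rightarrow> 'a) \<Rightarrow> bool" where
  "switch_graph V s0 s1 \<longleftrightarrow> finite V \<and> (\<forall>v\<in>V. s0 v \<in> V \<and> s1 v \<in> V)"

definition sg_edges :: "'a set \<Rightarrow> ('a \<Rightarrow> 'a) \<Rightarrow> ('a \<Rightarrow> 'a) \<Rightarrow> ('a \<times> 'a) set" where
  "sg_edges V s0 s1 = {(v, s0 v) | v. v \<in> V} \<union> {(v, s1 v) | v. v \<in> V}"

text \<open>State of Run: (current vertex, s_curr, s_next).\<close>
type_synonym 'a run_state = "'a \<times> ('a \<Rightarrow> 'a) \<times> ('a \<Rightarrow> 'a)"

text \<open>One iteration of the while loop; once the vertex is d the loop has stopped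
  and the state stays fixed.\<close>
definition run_step :: "'a \<Rightarrow> 'a run_state \<Rightarrow> 'a run_state" where
  "run_step d st = (case st of (v, sc, sn) \<Rightarrow>
     if v = d then (v, sc, sn)
     else (sc v, sc(v := sn v), sn(v := sc v)))"

definition run_state :: "('a \<Rightarrow> 'a) \<Rightarrow> ('a \<Rightarrow> 'a) \<Rightarrow> 'a \<Rightarrow> 'a \<Rightarrow> nat \<Rightarrow> 'a run_state" where
  "run_state s0 s1 o' d i = (run_step d ^^ i) (o', s0, s1)"

definition traversed_at :: "('a \<Rightarrow> 'a) \<Rightarrow> ('a \<Rightarrow> 'a) \<Rightarrow> 'a \<Rightarrow> 'a \<Rightarrow> nat \<Rightarrow> ('a \<times> 'a) option" where
  "traversed_at s0 s1 o' d i = (case run_state s0 s1 o' d i of (v, sc, sn) \<Rightarrow>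
     if v = d then None else Some (v, sc v))"

definition traversals :: "('a \<Rightarrow> 'a) \<Rightarrow> ('a \<Rightarrow> 'a) \<Rightarrow> 'a \<Rightarrow> 'a \<Rightarrow> 'a \<times> 'a \<Rightarrow> nat set" where
  "traversals s0 s1 o' d e = {i. traversed_at s0 s1 o' d i = Some e}"

definition hopeful :: "'a set \<Rightarrow> ('a \<Rightarrow> 'a) \<Rightarrow> ('a \<Rightarrow> 'a) \<Rightarrow> 'a \<Rightarrow> 'a \<times> 'a \<Rightarrow> bool" where
  "hopeful V s0 s1 d e \<longleftrightarrow> e \<in> sg_edges V s0 s1 \<and> (snd e, d) \<in> (sg_edges V s0 s1)\<^sup>*"

definition desperation :: "'a set \<Rightarrow> ('a \<Rightarrow> 'a) \<Rightarrow> ('a \<Rightarrow> 'a) \<Rightarrow> 'a \<Rightarrow> 'a \<times> 'a \<Rightarrow> nat" where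
  "desperation V s0 s1 d e = (LEAST n. (snd e, d) \<in> (sg_edges V s0 s1) ^^ n)"

end

theory Submission
  imports Defs "HOL-Library.Infinite_Set"
begin

lemma count_Suc: "card {j. j < Suc N \<and> P j} = card {j. j < N \<and> P j} + (if P N then 1 else 0)"
proof -
  have "{j. j < Suc N \<and> P j} = {j. j < N \<and> P j} \<union> (if P N then {N} else {})"
    by (auto simp: less_Suc_eq)
  then show ?thesis by auto
qed

lemma bounded_prefix:
  fixes A :: "nat set"
  assumes "\<forall>N. card {i. i < N \<and> i \<in> A} \<le> (B::nat)"
  shows "finite A \<and> card A \<le> B"
proof -
  have fin: "finite A"
  proof (rule ccontr)
    assume "infinite A"
    then obtain F where F: "F \<subseteq> A" "finite F" "card F = Suc B"
      using infinite_arbitrarily_large by blast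
    then have "F \<noteq> {}" by auto
    define N where "N = Suc (Max F)"
    have "F \<subseteq> {i. i < N \<and> i \<in> A}" using F N_def
      by (auto simp: less_Suc_eq_le)
    then have "card F \<le> card {i. i < N \<and> i \<in> A}"
      by (intro card_mono) auto
    with assms F show False by (metis Suc_n_not_le_n le_trans)
  qed
  then obtain N where "A \<subseteq> {..<N}" using finite_nat_iff_bounded by blast
  then have "A = {i. i < N \<and> i \<in> A}" by auto
  then show ?thesis using fin assms by metis
qed

context
  fixes s0 s1 :: "'a \<Rightarrow> 'a" and o' d :: 'a
begin

definition "pos i = fst (run_state s0 s1 o' d i)"
definition "scf i = fst (snd (run_state s0 s1 o' d i))"
definition "snf i = snd (snd (run_state s0 s1 o' d i))"

lemma rs_eq: "run_state s0 s1 o' d i = (pos i, scf i, snf i)"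
  by (simp add: pos_def scf_def snf_def)

lemma rs_Suc: "run_state s0 s1 o' d (Suc i) = run_step d (run_state s0 s1 o' d i)"
  by (simp add: run_state_def)

lemma pos_Suc: "pos (Suc i) = (if pos i = d then pos i else scf i (pos i))"
  using rs_Suc[of i] rs_eq[of i] rs_eq[of "Suc i"] by (auto simp: run_step_def)

lemma scf_Suc: "scf (Suc i) = (if pos i = d then scf i else (scf i)(pos i := snf i (pos i)))"
  using rs_Suc[of i] rs_eq[of i] rs_eq[of "Suc i"] by (auto simp: run_step_def)

lemma snf_Suc: "snf (Suc i) = (if pos i = d then snf i else (snf i)(pos i := scf i (pos i)))"
  using rs_Suc[of i] rs_eq[of i] rs_eq[of "Suc i"] by (auto simp: run_step_def)

lemma tr_eq: "traversed_at s0 s1 o' d i = (if pos i = d then None else Some (pos i, scf i (pos i)))"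
  using rs_eq[of i] by (simp add: traversed_at_def)

lemma stays: "pos i = d \<Longrightarrow> pos (i + m) = d"
  by (induction m) (auto simp: pos_Suc)

lemma pairs: "{scf i x, snf i x} = {s0 x, s1 x}"
proof (induction i)
  case 0
  then show ?case by (simp add: scf_def snf_def run_state_def)
next
  case (Suc i)
  then show ?case by (auto simp: scf_Suc snf_Suc)
qed

lemma base: "finite (traversals s0 s1 o' d (v, d)) \<and> card (traversals s0 s1 o' d (v, d)) \<le> 1"
proof -
  have "\<forall>i\<in>traversals s0 s1 o' d (v, d). \<forall>j\<in>traversals s0 s1 o' d (v, d). i = j"
  proof (intro ballI)
    have key: "\<not> (i < j)" if "i \<in> traversals s0 s1 o' d (v, d)" "j \<in> traversals s0 s1 o' d (v, d)" for i j
    proof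
      assume "i < j"
      from that have "pos i \<noteq> d" "scf i (pos i) = d" "pos j \<noteq> d"
        by (auto simp: traversals_def tr_eq split: if_splits)
      then have "pos (Suc i) = d" by (simp add: pos_Suc)
      then have "pos (Suc i + (j - Suc i)) = d" by (rule stays)
      with \<open>i < j\<close> \<open>pos j \<noteq> d\<close> show False by simp
    qed
    fix i j assume "i \<in> traversals s0 s1 o' d (v, d)" "j \<in> traversals s0 s1 o' d (v, d)"
    then show "i = j" using key[of i j] key[of j i] by simp
  qed
  then have "traversals s0 s1 o' d (v, d) = {} \<or> (\<exists>i. traversals s0 s1 o' d (v, d) = {i})"
    by blast
  then show ?thesis by auto
qed

lemma alt:
  assumes "w \<noteq> d" "u = s0 w \<or> u = s1 w"
  shows "card {j. j < N \<and> pos j = w}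
     \<le> 2 * card {j. j < N \<and> j \<in> traversals s0 s1 o' d (w, u)} + (if scf N w = u then 1 else 0)"
proof (induction N)
  case 0
  then show ?case by simp
next
  case (Suc N)
  have tr: "(N \<in> traversals s0 s1 o' d (w, u)) = (pos N = w \<and> scf N w = u)"
    using assms by (auto simp: traversals_def tr_eq)
  show ?case
  proof (cases "pos N = w")
    case True
    have sc: "scf (Suc N) w = snf N w" using True assms by (simp add: scf_Suc)
    have "u \<in> {scf N w, snf N w}" using pairs[of N w] assms by auto
    then show ?thesis using Suc.IH True tr sc
      by (simp only: count_Suc) (auto split: if_splits)
  next
    case False
    have sc: "scf (Suc N) w = scf N w" using False by (simp add: scf_Suc)
    show ?thesis using Suc.IH False tr sc
      by (simp only: count_Suc) (auto split: if_splits)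
  qed
qed

lemma main:
  "(w, d) \<in> (sg_edges V s0 s1) ^^ k \<Longrightarrow>
    finite (traversals s0 s1 o' d (v, w)) \<and> card (traversals s0 s1 o' d (v, w)) \<le> 2 ^ (k + 1) - 1"
proof (induction k arbitrary: v w)
  case 0
  then show ?case using base[of v] by simp
next
  case (Suc k)
  show ?case
  proof (cases "w = d")
    case True
    have "(2::nat) \<le> 2 ^ (Suc k + 1)"
      using power_increasing[of 1 "Suc k + 1" "2::nat"] by simp
    then have "(1::nat) \<le> 2 ^ (Suc k + 1) - 1" by linarith
    then show ?thesis using base[of v] True by simp
  next
    case wd: False
    from Suc.prems obtain u where wu: "(w, u) \<in> sg_edges V s0 s1" and ud: "(u, d) \<in> (sg_edges V s0 s1) ^^ k"
      by (meson relpow_Suc_D2)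
    from wu have u01: "u = s0 w \<or> u = s1 w" by (auto simp: sg_edges_def)
    from Suc.IH[OF ud] have IH: "finite (traversals s0 s1 o' d (w, u))"
      "card (traversals s0 s1 o' d (w, u)) \<le> 2 ^ (k + 1) - 1" by auto
    have "card {i. i < N \<and> i \<in> traversals s0 s1 o' d (v, w)} \<le> 2 ^ (Suc k + 1) - 1" for N
    proof -
      have "card {i. i < N \<and> i \<in> traversals s0 s1 o' d (v, w)} \<le> card {j. j < Suc N \<and> pos j = w}"
      proof (rule card_inj_on_le[where f = Suc])
        show "inj_on Suc {i. i < N \<and> i \<in> traversals s0 s1 o' d (v, w)}" by simp
        show "Suc ` {i. i < N \<and> i \<in> traversals s0 s1 o' d (v, w)} \<subseteq> {j. j < Suc N \<and> pos j = w}"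
          by (auto simp: traversals_def tr_eq pos_Suc split: if_splits)
        show "finite {j. j < Suc N \<and> pos j = w}" by simp
      qed
      also have "\<dots> \<le> 2 * card {j. j < Suc N \<and> j \<in> traversals s0 s1 o' d (w, u)} + 1"
        using alt[OF wd u01, of "Suc N"] by (auto split: if_splits)
      also have "card {j. j < Suc N \<and> j \<in> traversals s0 s1 o' d (w, u)} \<le> card (traversals s0 s1 o' d (w, u))"
        using IH(1) by (intro card_mono) auto
      finally have "card {i. i < N \<and> i \<in> traversals s0 s1 o' d (v, w)} \<le> 2 * card (traversals s0 s1 o' d (w, u)) + 1"
        by simp
      also have "\<dots> \<le> 2 * (2 ^ (k + 1) - 1) + 1" using IH(2) by simp
      also have "\<dots> = 2 ^ (Suc k + 1) - 1"
        proof -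
        obtain m :: nat where m: "m = 2 ^ k" "1 \<le> m" by simp
        have "2 * (2 ^ (k + 1) - 1) + 1 = 2 * (2 * m - 1) + (1::nat)" using m by simp
        also have "\<dots> = 4 * m - 1" using m by arith
        also have "\<dots> = 2 ^ (Suc k + 1) - 1" using m by simp
        finally show ?thesis .
      qed
      finally show ?thesis .
    qed
    then show ?thesis using bounded_prefix by blast
  qed
qed

end

theorem lemma2:
  fixes V :: "'a set" and s0 s1 :: "'a \<Rightarrow> 'a" and o' d v w :: 'a and k :: nat
  assumes "switch_graph V s0 s1"
    and "o' \<in> V" and "d \<in> V" and "o' \<noteq> d"
    and "hopeful V s0 s1 d (v, w)"
    and "desperation V s0 s1 d (v, w) = k"
  shows "finite (traversals s0 s1 o' d (v, w))
         \<and> card (traversals s0 s1 o' d (v, w)) \<le> 2 ^ (k + 1) - 1"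
proof -
  from assms(5) have "(w, d) \<in> (sg_edges V s0 s1)\<^sup>*" by (simp add: hopeful_def)
  then obtain n where "(w, d) \<in> (sg_edges V s0 s1) ^^ n" using rtrancl_power by blast
  then have "(w, d) \<in> (sg_edges V s0 s1) ^^ k"
    using assms(6) unfolding desperation_def by (metis LeastI snd_conv)
  then show ?thesis by (rule main)
qed

end
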